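(* For every non-zero integer $n$, the torsion subgroup of the Mordell–Weil group $E_n(\mathbb{Q})$ is isomorphic to $\mathbb{Z}/2\mathbb{Z}$, where $E_n$ is the elliptic curve $y^2 = x^3 + 2nx^2 - n^2x$.
   Context: $E_n$ is the quadratic twist by $n$ of the elliptic curve $E_1 : y^2 = x^3 + 2x^2 - x$ (conductor $128$). *)

theory Defs
  imports Complex_Main "HOL-Algebra.Elementary_Groups"
begin

datatype point = Inf | Pt rat rat

definition on_curve :: "rat \<Rightarrow> rat \<Rightarrow> point \<Rightarrow> bool" where
  "on_curve a b P = (case P of Inf \<Rightarrow> True
                      | Pt x y \<Rightarrow> y^2 = x^3 + a * x^2 + b * x)"

definition pt_add :: "rat \<Rightarrow> rat \<Rightarrow> point \<Rightarrow> point \<Rightarrow> point" where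
  "pt_add a b P Q = (case P of Inf \<Rightarrow> Q | Pt x1 y1 \<Rightarrow>
      (case Q of Inf \<Rightarrow> P | Pt x2 y2 \<Rightarrow>
        (if x1 = x2 \<and> y1 = - y2 then Inf
         else (let l = (if x1 = x2 then (3 * x1^2 + 2 * a * x1 + b) / (2 * y1)
                        else (y2 - y1) / (x2 - x1));
                   x3 = l^2 - a - x1 - x2
               in Pt x3 (- (y1 + l * (x3 - x1)))))))"

definition mw_group :: "rat \<Rightarrow> rat \<Rightarrow> point monoid" where
  "mw_group a b = \<lparr> carrier = {P. on_curve a b P}, mult = pt_add a b, one = Inf \<rparr>"

definition torsion_subgroup :: "('a, 'b) monoid_scheme \<Rightarrow> ('a, 'b) monoid_scheme" where
  "torsion_subgroup G = G \<lparr> carrier := {P \<in> carrier G. \<exists>k::nat. k > 0 \<and> P [^]\<^bsub>G\<^esub> k = \<one>\<^bsub>G\<^esub>} \<rparr>"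

definition E :: "int \<Rightarrow> point monoid" where
  "E n = mw_group (2 * of_int n) (- ((of_int n :: rat) ^ 2))"

end

theory Submission
  imports Defs "HOL-Computational_Algebra.Primes"
begin

definition v2 :: "rat \<Rightarrow> int" where
  "v2 q = (case quotient_of q of (p, r) \<Rightarrow> int (multiplicity (2::int) p) - int (multiplicity (2::int) r))"

lemma prime2: "prime_elem (2::int)"
  by (simp add: prime_elem_iff_prime_abs)

lemma mult2_mult: "(x::int) \<noteq> 0 \<Longrightarrow> y \<noteq> 0 \<Longrightarrow> multiplicity 2 (x*y) = multiplicity 2 x + multiplicity 2 y"
  using prime_elem_multiplicity_mult_distrib[OF prime2] by blast

lemma v2_frac:
  assumes "a \<noteq> 0" "b \<noteq> 0"
  shows "v2 (of_int a / of_int b) = int (multiplicity 2 a) - int (multiplicity 2 b)"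
proof -
  obtain p r where qr: "quotient_of (of_int a / of_int b) = (p, r)" by (cases "quotient_of (of_int a / of_int b)") auto
  have r0: "r > 0" using quotient_of_denom_pos[OF qr] .
  have eq: "(of_int a / of_int b :: rat) = of_int p / of_int r" using quotient_of_div[OF qr] .
  have p0: "p \<noteq> 0" using eq assms r0 by auto
  have "a * r = p * b"
  proof -
    have "(of_int a :: rat) * of_int r = of_int p * of_int b" using eq assms r0
      by (simp add: field_simps)
    then show ?thesis by (metis of_int_eq_iff of_int_mult)
  qed
  then have "multiplicity 2 (a*r) = multiplicity 2 (p*b)" by simp
  then have "multiplicity 2 a + multiplicity 2 r = multiplicity 2 p + multiplicity 2 b"
    using mult2_mult assms p0 r0 by simp
  then show ?thesis unfolding v2_def qr by simp
qed

lemma rat_frac: obtains p r where "q = of_int p / of_int r" "r \<noteq> 0" "(q::rat) \<noteq> 0 \<Longrightarrow> p \<noteq> 0"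
proof -
  obtain p r where qr: "quotient_of q = (p, r)" by (cases "quotient_of q") auto
  show ?thesis using that[of p r] quotient_of_div[OF qr] quotient_of_denom_pos[OF qr] by auto
qed

lemma v2_mult: "x \<noteq> 0 \<Longrightarrow> y \<noteq> 0 \<Longrightarrow> v2 (x * y) = v2 x + v2 y"
proof -
  assume x: "x \<noteq> 0" and y: "y \<noteq> 0"
  obtain p r where 1: "x = of_int p / of_int r" "r \<noteq> 0" "p \<noteq> 0" using rat_frac[of x] x by metis
  obtain p' r' where 2: "y = of_int p' / of_int r'" "r' \<noteq> 0" "p' \<noteq> 0" using rat_frac[of y] y by metis
  have e: "x * y = of_int (p*p') / of_int (r*r')" using 1 2 by simp
  have "v2 (x*y) = int (multiplicity 2 (p*p')) - int (multiplicity 2 (r*r'))"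
    unfolding e using 1 2 by (intro v2_frac) auto
  then show ?thesis using 1 2 v2_frac mult2_mult by simp
qed

lemma v2_inverse: "v2 (inverse x) = - v2 x"
proof (cases "x = 0")
  case True then show ?thesis by (simp add: v2_def)
next
  case False
  obtain p r where 1: "x = of_int p / of_int r" "r \<noteq> 0" "p \<noteq> 0" using rat_frac[of x] False by metis
  have "inverse x = of_int r / of_int p" using 1 by simp
  then show ?thesis using 1 v2_frac by simp
qed

lemma v2_divide: "x \<noteq> 0 \<Longrightarrow> y \<noteq> 0 \<Longrightarrow> v2 (x / y) = v2 x - v2 y"
  by (simp add: divide_inverse v2_mult v2_inverse)

lemma v2_1: "v2 1 = 0" using v2_frac[of 1 1] by simp

lemma v2_power: "x \<noteq> 0 \<Longrightarrow> v2 (x ^ k) = int k * v2 x"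
  by (induction k) (auto simp: v2_mult algebra_simps v2_1)

lemma v2_int: "z \<noteq> 0 \<Longrightarrow> v2 (of_int z) = int (multiplicity 2 z)"
  using v2_frac[of z 1] by simp

lemma v2_int_nonneg: "v2 (of_int z) \<ge> 0"
  by (cases "z = 0") (auto simp: v2_int v2_def)

lemma v2_2: "v2 2 = 1"
proof -
  have "multiplicity (2::int) 2 = 1" using multiplicity_self[of "2::int"] by simp
  then show ?thesis using v2_int[of 2] by simp
qed

lemma v2_uminus: "v2 (- x) = v2 x"
proof (cases "x = 0")
  case True then show ?thesis by simp
next
  case False
  have "v2 (-1) = 0" using v2_int[of "-1"] multiplicity_unit_right[of "-1::int" 2] by simp
  then show ?thesis using v2_mult[of "-1" x] False by simp
qed

lemma v2_add: assumes "x \<noteq> 0" "y \<noteq> 0" "x + y \<noteq> 0" shows "min (v2 x) (v2 y) \<le> v2 (x + y)"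
proof -
  obtain p r where 1: "x = of_int p / of_int r" "r \<noteq> 0" "p \<noteq> 0" using rat_frac[of x] assms by metis
  obtain p' r' where 2: "y = of_int p' / of_int r'" "r' \<noteq> 0" "p' \<noteq> 0" using rat_frac[of y] assms by metis
  have s: "x + y = of_int (p*r' + p'*r) / of_int (r*r')" using 1 2 by (simp add: field_simps)
  have sn: "p*r' + p'*r \<noteq> 0"
  proof
    assume h: "p*r' + p'*r = 0"
    have "(of_int (p*r' + p'*r) :: rat) = 0" using h by simp
    then have "x + y = 0" using s by (simp only:)
    then show False using assms by simp
  qed
  define m where "m = min (multiplicity 2 (p*r')) (multiplicity 2 (p'*r))"
  have "2^m dvd p*r'" unfolding m_def by (rule multiplicity_dvd') simp
  moreover have "2^m dvd p'*r" unfolding m_def by (rule multiplicity_dvd') simp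
  ultimately have "2^m dvd p*r' + p'*r" by simp
  then have "m \<le> multiplicity 2 (p*r' + p'*r)" using sn by (intro multiplicity_geI) auto
  moreover have "v2 (x+y) = int (multiplicity 2 (p*r' + p'*r)) - int (multiplicity 2 (r*r'))"
    unfolding s using sn 1 2 by (intro v2_frac) auto
  moreover have "v2 x = int (multiplicity 2 p) - int (multiplicity 2 r)"
    unfolding 1(1) using 1 by (intro v2_frac) auto
  moreover have "v2 y = int (multiplicity 2 p') - int (multiplicity 2 r')"
    unfolding 2(1) using 2 by (intro v2_frac) auto
  ultimately show ?thesis using 1 2 mult2_mult unfolding m_def by auto
qed

lemma v2_add_less: assumes "x \<noteq> 0" "y \<noteq> 0" "v2 x < v2 y" shows "v2 (x + y) = v2 x" "x + y \<noteq> 0"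
proof -
  show ne: "x + y \<noteq> 0"
  proof
    assume "x + y = 0" then have "y = - x" by (simp add: eq_neg_iff_add_eq_0)
    then show False using assms v2_uminus by simp
  qed
  have "min (v2 x) (v2 y) \<le> v2 (x + y)" using v2_add assms ne by blast
  moreover have "min (v2 (x+y)) (v2 (-y)) \<le> v2 (x + y + - y)" using v2_add[of "x+y" "-y"] assms ne by simp
  ultimately show "v2 (x + y) = v2 x" using assms v2_uminus by (auto simp: min_def split: if_splits)
qed

definition nonsing :: "rat \<Rightarrow> rat \<Rightarrow> bool" where
  "nonsing a b \<longleftrightarrow> b \<noteq> 0 \<and> (\<forall>x. x^2 + a*x + b \<noteq> 0)"

lemma on_curve_Pt: "on_curve a b (Pt x y) \<longleftrightarrow> y^2 = x^3 + a*x^2 + b*x"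
  by (simp add: on_curve_def)

lemma pt_add_chord:
  assumes "x1 \<noteq> x2" "l = (y2-y1)/(x2-x1)"
  shows "pt_add a b (Pt x1 y1) (Pt x2 y2) = Pt (l^2-a-x1-x2) (-(y1 + l*((l^2-a-x1-x2) - x1)))"
  using assms by (simp add: pt_add_def Let_def)

lemma pt_add_tangent:
  assumes "y1 \<noteq> 0" "l = (3*x1^2 + 2*a*x1 + b)/(2*y1)"
  shows "pt_add a b (Pt x1 y1) (Pt x1 y1) = Pt (l^2-a-x1-x1) (-(y1 + l*((l^2-a-x1-x1) - x1)))"
proof -
  have "y1 \<noteq> - y1" using assms(1) by simp
  then show ?thesis using assms by (simp add: pt_add_def Let_def)
qed

lemma cubic_root:
  fixes a b l v x1 x2 x3 :: rat
  assumes e1: "x1+x2+x3 = l^2 - a" and e2: "x1*x2+x1*x3+x2*x3 = b - 2*l*v" and e3: "x1*x2*x3 = v^2"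
  shows "(l*x3+v)^2 = x3^3 + a*x3^2 + b*x3"
  using assms by algebra

lemma add_line:
  fixes a b x1 y1 x2 y2 :: rat
  assumes c1: "y1^2 = x1^3 + a*x1^2 + b*x1" and c2: "y2^2 = x2^3 + a*x2^2 + b*x2"
    and ni: "\<not>(x1 = x2 \<and> y1 = -y2)"
  shows "\<exists>l v x3. y1 = l*x1+v \<and> y2 = l*x2+v \<and> x1+x2+x3 = l^2 - a \<and>
     x1*x2+x1*x3+x2*x3 = b - 2*l*v \<and> x1*x2*x3 = v^2 \<and>
     pt_add a b (Pt x1 y1) (Pt x2 y2) = Pt x3 (-(l*x3+v))"
proof (cases "x1 = x2")
  case False
  define l where "l = (y2-y1)/(x2-x1)"
  define v where "v = y1 - l*x1"
  define x3 where "x3 = l^2 - a - x1 - x2"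
  have d: "x2 - x1 \<noteq> 0" using False by simp
  have hl: "l*(x2-x1) = y2 - y1" using d unfolding l_def by simp
  have y2: "y2 = l*x2+v" using hl unfolding v_def by algebra
  have "(x1*x2+x1*x3+x2*x3 - (b - 2*l*v)) * (x2-x1) = 0"
    using c1 c2 hl unfolding v_def x3_def by algebra
  then have e2: "x1*x2+x1*x3+x2*x3 = b - 2*l*v" using d by simp
  have "(x1*x2*x3 - v^2) * (x2-x1) = 0"
    using c1 c2 hl unfolding v_def x3_def by algebra
  then have e3: "x1*x2*x3 = v^2" using d by simp
  have "pt_add a b (Pt x1 y1) (Pt x2 y2) = Pt x3 (-(y1 + l*(x3 - x1)))"
    using pt_add_chord[OF False l_def] unfolding x3_def .
  also have "\<dots> = Pt x3 (-(l*x3+v))" unfolding v_def by (simp add: algebra_simps)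
  finally have "pt_add a b (Pt x1 y1) (Pt x2 y2) = Pt x3 (-(l*x3+v))" .
  moreover have "x1+x2+x3 = l^2 - a" unfolding x3_def by simp
  moreover have "y1 = l*x1+v" unfolding v_def by simp
  ultimately show ?thesis using y2 e2 e3 by blast
next
  case True
  then have "y1^2 = y2^2" using c1 c2 by simp
  then have "y1 = y2 \<or> y1 = -y2" by (simp add: power2_eq_iff)
  then have yy: "y1 = y2" and y0: "y1 \<noteq> 0" using ni True by auto
  define l where "l = (3*x1^2 + 2*a*x1 + b)/(2*y1)"
  define v where "v = y1 - l*x1"
  define x3 where "x3 = l^2 - a - x1 - x2"
  have hl: "l*(2*y1) = 3*x1^2 + 2*a*x1 + b" using y0 unfolding l_def by simp
  have e2: "x1*x2+x1*x3+x2*x3 = b - 2*l*v"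
  proof -
    have "(x1*x2+x1*x3+x2*x3 - (b - 2*l*v)) * (2*y1) = 0"
      using c1 hl True unfolding v_def x3_def by algebra
    then show ?thesis using y0 by simp
  qed
  have e3: "x1*x2*x3 = v^2"
  proof -
    have "(x1*x2*x3 - v^2) * (2*y1) = 0"
      using c1 hl True unfolding v_def x3_def by algebra
    then show ?thesis using y0 by simp
  qed
  have "pt_add a b (Pt x1 y1) (Pt x2 y2) = Pt x3 (-(y1 + l*(x3 - x1)))"
    using pt_add_tangent[OF y0 l_def] True yy unfolding x3_def by simp
  also have "\<dots> = Pt x3 (-(l*x3+v))" unfolding v_def by (simp add: algebra_simps)
  finally have "pt_add a b (Pt x1 y1) (Pt x2 y2) = Pt x3 (-(l*x3+v))" .
  moreover have "x1+x2+x3 = l^2 - a" unfolding x3_def by simp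
  moreover have "y1 = l*x1+v" unfolding v_def by simp
  moreover have "y2 = l*x2+v" unfolding v_def using yy True by simp
  ultimately show ?thesis using e2 e3 by blast
qed

lemma line_add:
  fixes A B X1 Y1 X2 Y2 L M X3 :: rat
  assumes ns: "nonsing A B"
    and c1: "Y1^2 = X1^3 + A*X1^2 + B*X1"
    and l1: "Y1 = L*X1+M" and l2: "Y2 = L*X2+M"
    and e1: "X1+X2+X3 = L^2 - A" and e2: "X1*X2+X1*X3+X2*X3 = B - 2*L*M" and e3: "X1*X2*X3 = M^2"
  shows "pt_add A B (Pt X1 Y1) (Pt X2 Y2) = Pt X3 (-(L*X3+M))"
proof (cases "X1 = X2")
  case False
  have d: "X2 - X1 \<noteq> 0" using False by simp
  have sl: "L = (Y2-Y1)/(X2-X1)" using d l1 l2 by (simp add: field_simps algebra_simps)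
  have x3: "L^2 - A - X1 - X2 = X3" using e1 by simp
  show ?thesis unfolding pt_add_chord[OF False sl] x3 by (simp add: l1 algebra_simps)
next
  case True
  have yy: "Y1 = Y2" using True l1 l2 by simp
  have der: "3*X1^2 + 2*A*X1 + B = 2*L*Y1"
    using e1 e2 True l1 by algebra
  have y0: "Y1 \<noteq> 0"
  proof
    assume "Y1 = 0"
    then have f0: "X1*(X1^2 + A*X1 + B) = 0" and f1: "3*X1^2 + 2*A*X1 + B = 0"
      using c1 der by (auto simp: algebra_simps power2_eq_square power3_eq_cube)
    show False
    proof (cases "X1 = 0")
      case True then show False using f1 ns unfolding nonsing_def by simp
    next
      case False then show False using f0 ns unfolding nonsing_def by simp
    qed
  qed
  have sl: "L = (3*X1^2 + 2*A*X1 + B)/(2*Y1)" using der y0 by (simp add: field_simps)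
  have x3: "L^2 - A - X1 - X1 = X3" using e1 True by simp
  show ?thesis unfolding True[symmetric] yy[symmetric] pt_add_tangent[OF y0 sl] x3 by (simp add: l1 algebra_simps)
qed

lemma add_closed:
  assumes "on_curve a b P" "on_curve a b Q"
  shows "on_curve a b (pt_add a b P Q)"
proof (cases P)
  case Inf then show ?thesis using assms by (simp add: pt_add_def)
next
  case (Pt x1 y1)
  show ?thesis
  proof (cases Q)
    case Inf then show ?thesis using assms Pt by (simp add: pt_add_def)
  next
    case (Pt x2 y2)
    note P = \<open>P = Pt x1 y1\<close>
    show ?thesis
    proof (cases "x1 = x2 \<and> y1 = -y2")
      case True then show ?thesis using P Pt by (simp add: pt_add_def on_curve_def)
    next
      case False
      obtain l v x3 where h: "y1 = l*x1+v" "y2 = l*x2+v" "x1+x2+x3 = l^2 - a"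
        "x1*x2+x1*x3+x2*x3 = b - 2*l*v" "x1*x2*x3 = v^2"
        "pt_add a b (Pt x1 y1) (Pt x2 y2) = Pt x3 (-(l*x3+v))"
        using add_line[of y1 x1 a b y2 x2] assms P Pt False by (auto simp: on_curve_Pt)
      have "(l*x3+v)^2 = x3^3 + a*x3^2 + b*x3" using cubic_root[OF h(3,4,5)] .
      then have "on_curve a b (Pt x3 (-(l*x3+v)))" by (unfold on_curve_Pt power2_minus)
      then show ?thesis using h(6) P Pt by simp
    qed
  qed
qed

definition phi :: "rat \<Rightarrow> point \<Rightarrow> point" where
  "phi b P = (case P of Inf \<Rightarrow> Inf | Pt x y \<Rightarrow> if x = 0 then Inf else Pt (y^2/x^2) (y*(x^2-b)/x^2))"

lemma phi_curve:
  assumes "on_curve a b P"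
  shows "on_curve (-2*a) (a^2-4*b) (phi b P)"
proof (cases P)
  case Inf then show ?thesis by (simp add: phi_def on_curve_def)
next
  case (Pt x y)
  show ?thesis
  proof (cases "x = 0")
    case True then show ?thesis using Pt by (simp add: phi_def on_curve_def)
  next
    case False
    define X where "X = y^2/x^2"
    define Y where "Y = y*(x^2-b)/x^2"
    have hX: "X*x^2 = y^2" unfolding X_def using False by simp
    have hY: "Y*x^2 = y*(x^2-b)" unfolding Y_def using False by simp
    have c: "y^2 = x^3 + a*x^2 + b*x" using assms Pt by (simp add: on_curve_Pt)
    have "(Y^2 - (X^3 + (-2*a)*X^2 + (a^2-4*b)*X)) * x^6 = 0"
      using hX hY c by algebra
    then have "Y^2 = X^3 + (-2*a)*X^2 + (a^2-4*b)*X" using False by simp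
    then show ?thesis using Pt False unfolding phi_def X_def Y_def by (simp add: on_curve_Pt)
  qed
qed

lemma phi_line_pt:
  fixes a b l v x y :: rat
  assumes c: "y^2 = x^3 + a*x^2 + b*x" and ln: "y = l*x+v" and x0: "x \<noteq> 0" and v0: "v \<noteq> 0"
  shows "y*(x^2-b)/x^2 = ((v*l - b)/v) * (y^2/x^2) + (v^2 - a*v*l + b*l^2)/v"
proof -
  have "v*y*(x^2-b) = (v*l - b)*y^2 + (v^2 - a*v*l + b*l^2)*x^2"
    using c ln by algebra
  then have "v*y*(x^2-b)/(v*x^2) = ((v*l - b)*y^2 + (v^2 - a*v*l + b*l^2)*x^2)/(v*x^2)" by simp
  then show ?thesis using x0 v0 by (simp add: add_divide_distrib)
qed

lemma phi_sym:
  fixes a b l v x1 x2 x3 :: rat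
  assumes e1: "x1+x2+x3 = l^2 - a" and e2: "x1*x2+x1*x3+x2*x3 = b - 2*l*v" and e3: "x1*x2*x3 = v^2"
    and x1: "x1 \<noteq> 0" and x2: "x2 \<noteq> 0" and x3: "x3 \<noteq> 0" and v0: "v \<noteq> 0"
  defines "X1 \<equiv> (l*x1+v)^2/x1^2" and "X2 \<equiv> (l*x2+v)^2/x2^2" and "X3 \<equiv> (l*x3+v)^2/x3^2"
  defines "L \<equiv> (v*l - b)/v" and "M \<equiv> (v^2 - a*v*l + b*l^2)/v"
  shows "X1+X2+X3 = L^2 - (-2*a)" "X1*X2+X1*X3+X2*X3 = (a^2-4*b) - 2*L*M" "X1*X2*X3 = M^2"
proof -
  define r1 where "r1 = (l*x1+v)/x1"
  define r2 where "r2 = (l*x2+v)/x2"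
  define r3 where "r3 = (l*x3+v)/x3"
  have X: "X1 = r1^2" "X2 = r2^2" "X3 = r3^2"
    by (simp_all only: X1_def X2_def X3_def r1_def r2_def r3_def power_divide)
  have sr: "(r1+r2+r3)*v = l*v + b"
  proof -
    have "(r1+r2+r3)*(x1*x2*x3) = 3*l*(x1*x2*x3) + v*(x1*x2+x1*x3+x2*x3)"
      unfolding r1_def r2_def r3_def using x1 x2 x3 by (simp add: field_simps, algebra?)
    then have "(r1+r2+r3)*v^2 = 3*l*v^2 + v*(b - 2*l*v)" using e2 e3 by simp
    then have "((r1+r2+r3)*v - (l*v + b))*v = 0" by algebra
    then show ?thesis using v0 by simp
  qed
  have srr: "(r1*r2+r1*r3+r2*r3)*v = 2*l*b - a*v"
  proof -
    have "(r1*r2+r1*r3+r2*r3)*(x1*x2*x3) = 3*l^2*(x1*x2*x3) + 2*l*v*(x1*x2+x1*x3+x2*x3) + v^2*(x1+x2+x3)"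
      unfolding r1_def r2_def r3_def using x1 x2 x3 by (simp add: field_simps, algebra?)
    then have "(r1*r2+r1*r3+r2*r3)*v^2 = 3*l^2*v^2 + 2*l*v*(b - 2*l*v) + v^2*(l^2-a)" using e1 e2 e3 by simp
    then have "((r1*r2+r1*r3+r2*r3)*v - (2*l*b - a*v))*v = 0" by algebra
    then show ?thesis using v0 by simp
  qed
  have pr: "(r1*r2*r3)*v = v^2 - a*v*l + b*l^2"
  proof -
    have "(r1*r2*r3)*(x1*x2*x3) = (l*x1+v)*(l*x2+v)*(l*x3+v)"
      unfolding r1_def r2_def r3_def using x1 x2 x3 by (simp add: field_simps)
    also have "\<dots> = v*(v^2 - a*v*l + b*l^2)" using e1 e2 e3 by algebra
    finally have "(r1*r2*r3)*v^2 = v*(v^2 - a*v*l + b*l^2)" using e3 by simp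
    then have "((r1*r2*r3)*v - (v^2 - a*v*l + b*l^2))*v = 0" by algebra
    then show ?thesis using v0 by simp
  qed
  have sr': "r1+r2+r3 = l + b/v" using sr v0 by (simp add: field_simps)
  have srr': "r1*r2+r1*r3+r2*r3 = 2*l*b/v - a" using srr v0 by (simp add: field_simps)
  have pr': "r1*r2*r3 = M" using pr v0 unfolding M_def by (simp add: field_simps)
  have i1: "X1+X2+X3 = (r1+r2+r3)^2 - 2*(r1*r2+r1*r3+r2*r3)" unfolding X by algebra
  have i2: "X1*X2+X1*X3+X2*X3 = (r1*r2+r1*r3+r2*r3)^2 - 2*(r1+r2+r3)*(r1*r2*r3)" unfolding X by algebra
  have i3: "X1*X2*X3 = (r1*r2*r3)^2" unfolding X by algebra
  show "X1*X2*X3 = M^2" using i3 pr' by simp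
  show "X1+X2+X3 = L^2 - (-2*a)" unfolding i1 sr' srr' L_def using v0
    by (simp add: field_simps, algebra?)
  show "X1*X2+X1*X3+X2*X3 = (a^2-4*b) - 2*L*M" unfolding i2 sr' srr' pr' L_def M_def using v0
    by (simp add: field_simps, algebra?)
qed

lemma pt_add_Inf_l[simp]: "pt_add a b Inf Q = Q" by (simp add: pt_add_def)
lemma pt_add_Inf_r[simp]: "pt_add a b P Inf = P" by (cases P) (simp_all add: pt_add_def)
lemma pt_add_opp: "pt_add a b (Pt x y) (Pt x (-y)) = Inf" by (simp add: pt_add_def)
lemma phi_Inf[simp]: "phi b Inf = Inf" by (simp add: phi_def)

lemma nonsing_phi:
  assumes ns: "nonsing a b" and nsq: "\<forall>x. x^2 \<noteq> b"
  shows "nonsing (-2*a) (a^2-4*b)"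
proof -
  have "a^2 - 4*b \<noteq> 0"
  proof
    assume h: "a^2 - 4*b = 0"
    have "(-a/2)^2 + a*(-a/2) + b = 0" using h by (simp add: field_simps power2_eq_square) 
    then show False using ns unfolding nonsing_def by blast
  qed
  moreover have "\<forall>x. x^2 + (-2*a)*x + (a^2-4*b) \<noteq> 0"
  proof (intro allI notI)
    fix x assume "x^2 + (-2*a)*x + (a^2-4*b) = 0"
    then have "((x-a)/2)^2 = b" by (simp add: field_simps power2_eq_square, algebra?)
    then show False using nsq by blast
  qed
  ultimately show ?thesis unfolding nonsing_def by blast
qed

lemma phi_hom:
  assumes ns: "nonsing a b" and nsq: "\<forall>x. x^2 \<noteq> b"
    and cP: "on_curve a b P" and cQ: "on_curve a b Q"
  shows "phi b (pt_add a b P Q) = pt_add (-2*a) (a^2-4*b) (phi b P) (phi b Q)"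
proof (cases P)
  case Inf then show ?thesis by simp
next
  case (Pt x1 y1)
  note P = this
  show ?thesis
  proof (cases Q)
    case Inf then show ?thesis by simp
  next
    case (Pt x2 y2)
    note Q = this
    have c1: "y1^2 = x1^3 + a*x1^2 + b*x1" using cP P by (simp add: on_curve_Pt)
    have c2: "y2^2 = x2^3 + a*x2^2 + b*x2" using cQ Q by (simp add: on_curve_Pt)
    have b0: "b \<noteq> 0" using ns unfolding nonsing_def by simp
    show ?thesis
    proof (cases "x1 = x2 \<and> y1 = -y2")
      case True
      then have lhs: "pt_add a b P Q = Inf" using P Q by (simp add: pt_add_def)
      show ?thesis
      proof (cases "x1 = 0")
        case True then show ?thesis using lhs P Q \<open>x1 = x2 \<and> y1 = -y2\<close> by (simp add: phi_def)
      next
        case False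
        have "phi b Q = Pt (y1^2/x1^2) (-(y1*(x1^2-b)/x1^2))"
          using Q False \<open>x1 = x2 \<and> y1 = -y2\<close> by (auto simp: phi_def)
        moreover have "phi b P = Pt (y1^2/x1^2) (y1*(x1^2-b)/x1^2)" using P False by (simp add: phi_def)
        ultimately show ?thesis using lhs by (simp add: pt_add_opp)
      qed
    next
      case False
      obtain l v x3 where h: "y1 = l*x1+v" "y2 = l*x2+v" and e1: "x1+x2+x3 = l^2 - a"
        and e2: "x1*x2+x1*x3+x2*x3 = b - 2*l*v" and e3: "x1*x2*x3 = v^2"
        and s: "pt_add a b (Pt x1 y1) (Pt x2 y2) = Pt x3 (-(l*x3+v))"
        using add_line[OF c1 c2 False] by blast
      have s': "pt_add a b P Q = Pt x3 (-(l*x3+v))" using s P Q by simp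
      show ?thesis
      proof (cases "v = 0")
        case True
        then have "x1 = 0 \<or> x2 = 0 \<or> x3 = 0" using e3 by simp
        then consider (a) "x1 = 0" | (b) "x1 \<noteq> 0" "x2 = 0" | (c) "x1 \<noteq> 0" "x2 \<noteq> 0" "x3 = 0" by blast
        then show ?thesis
        proof cases
          case a
          then have "x2 \<noteq> 0" using False h True by auto
          have x23: "x2*x3 = b" using e2 a True by simp
          then have "x3 \<noteq> 0" using b0 by auto
          have "phi b P = Inf" using P a by (simp add: phi_def)
          moreover have "phi b (Pt x3 (-(l*x3+v))) = phi b Q"
          proof -
            have "-(l*x3)*(x3^2-b)/x3^2 = l*x2*(x2^2-b)/x2^2"
              using \<open>x2 \<noteq> 0\<close> \<open>x3 \<noteq> 0\<close> x23 by (simp add: field_simps, algebra?)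
            then show ?thesis using Q True h(2) \<open>x2 \<noteq> 0\<close> \<open>x3 \<noteq> 0\<close> by (simp add: phi_def power_mult_distrib)
          qed
          ultimately show ?thesis using s' by simp
        next
          case b
          have x13: "x1*x3 = b" using e2 b True by simp
          then have "x3 \<noteq> 0" using b0 by auto
          have "phi b Q = Inf" using Q b by (simp add: phi_def)
          moreover have "phi b (Pt x3 (-(l*x3+v))) = phi b P"
          proof -
            have "-(l*x3)*(x3^2-b)/x3^2 = l*x1*(x1^2-b)/x1^2"
              using \<open>x1 \<noteq> 0\<close> \<open>x3 \<noteq> 0\<close> x13 by (simp add: field_simps, algebra?)
            then show ?thesis using P True h(1) \<open>x1 \<noteq> 0\<close> \<open>x3 \<noteq> 0\<close> by (simp add: phi_def power_mult_distrib)
          qed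
          ultimately show ?thesis using s' by simp
        next
          case c
          have x12: "x1*x2 = b" using e2 c True by simp
          have "phi b (pt_add a b P Q) = Inf" using s' c by (simp add: phi_def)
          moreover have "phi b P = Pt (l^2) (l*x1*(x1^2-b)/x1^2)"
            using P c h(1) True by (simp add: phi_def power_mult_distrib)
          moreover have "phi b Q = Pt (l^2) (-(l*x1*(x1^2-b)/x1^2))"
          proof -
            have "l*x2*(x2^2-b)/x2^2 = -(l*x1*(x1^2-b)/x1^2)"
              using c x12 by (simp add: field_simps, algebra?)
            then show ?thesis using Q c h(2) True by (simp add: phi_def power_mult_distrib)
          qed
          ultimately show ?thesis by (simp add: pt_add_opp)
        qed
      next
        case False
        have x1: "x1 \<noteq> 0" and x2: "x2 \<noteq> 0" and x3: "x3 \<noteq> 0" using e3 False by auto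
        define L where "L = (v*l - b)/v"
        define M where "M = (v^2 - a*v*l + b*l^2)/v"
        define X1 where "X1 = (l*x1+v)^2/x1^2"
        define X2 where "X2 = (l*x2+v)^2/x2^2"
        define X3 where "X3 = (l*x3+v)^2/x3^2"
        have sym: "X1+X2+X3 = L^2 - (-2*a)" "X1*X2+X1*X3+X2*X3 = (a^2-4*b) - 2*L*M" "X1*X2*X3 = M^2"
          using phi_sym[OF e1 e2 e3 x1 x2 x3 False] unfolding X1_def X2_def X3_def L_def M_def by blast+
        have c3: "(l*x3+v)^2 = x3^3 + a*x3^2 + b*x3" using cubic_root[OF e1 e2 e3] .
        have l1: "y1*(x1^2-b)/x1^2 = L * X1 + M"
          using phi_line_pt[OF c1 h(1) x1 False] h(1) unfolding L_def M_def X1_def by simp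
        have l2: "y2*(x2^2-b)/x2^2 = L * X2 + M"
          using phi_line_pt[OF c2 h(2) x2 False] h(2) unfolding L_def M_def X2_def by simp
        have l3: "(l*x3+v)*(x3^2-b)/x3^2 = L * X3 + M"
          using phi_line_pt[OF c3 refl x3 False] unfolding L_def M_def X3_def by simp
        have pP: "phi b P = Pt X1 (L*X1+M)" using P x1 l1 h(1) unfolding X1_def by (simp add: phi_def)
        have pQ: "phi b Q = Pt X2 (L*X2+M)" using Q x2 l2 h(2) unfolding X2_def by (simp add: phi_def)
        have cP': "(L*X1+M)^2 = X1^3 + (-2*a)*X1^2 + (a^2-4*b)*X1"
          using phi_curve[OF cP] pP by (simp add: on_curve_Pt)
        have "pt_add (-2*a) (a^2-4*b) (Pt X1 (L*X1+M)) (Pt X2 (L*X2+M)) = Pt X3 (-(L*X3+M))"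
          by (rule line_add[OF nonsing_phi[OF ns nsq] cP' refl refl sym])
        moreover have "phi b (pt_add a b P Q) = Pt X3 (-(L*X3+M))"
        proof -
          have "(-(l*x3+v))*(x3^2-b)/x3^2 = -((l*x3+v)*(x3^2-b)/x3^2)"
            by (simp only: mult_minus_left minus_divide_left)
          also have "\<dots> = -(L*X3+M)" using l3 by (simp only:)
          finally have "(-(l*x3+v))*(x3^2-b)/x3^2 = -(L*X3+M)" .
          moreover have "(-(l*x3) - v)^2 = (l*x3+v)^2" by algebra
          ultimately show ?thesis using s' x3 unfolding X3_def by (simp add: phi_def)
        qed
        ultimately show ?thesis using pP pQ by simp
      qed
    qed
  qed
qed

definition vge :: "rat \<Rightarrow> int \<Rightarrow> bool" where
  "vge q k \<longleftrightarrow> q = 0 \<or> k \<le> v2 q"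

lemma vge_0[simp]: "vge 0 k" by (simp add: vge_def)

lemma vge_v2: "vge x (v2 x)" by (simp add: vge_def)

lemma vge_mono: "vge x k \<Longrightarrow> l \<le> k \<Longrightarrow> vge x l" by (auto simp: vge_def)

lemma vge_uminus: "vge x k \<Longrightarrow> vge (-x) k" by (auto simp: vge_def v2_uminus)

lemma vge_add: assumes "vge x k" "vge y k" shows "vge (x+y) k"
proof (cases "x = 0 \<or> y = 0 \<or> x + y = 0")
  case True then show ?thesis using assms by auto
next
  case False
  then have "min (v2 x) (v2 y) \<le> v2 (x+y)" using v2_add by blast
  then show ?thesis using assms False by (auto simp: vge_def)
qed

lemma vge_diff: "vge x k \<Longrightarrow> vge y k \<Longrightarrow> vge (x-y) k"
  using vge_add[of x k "-y"] vge_uminus by simp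

lemma vge_mult: assumes "vge x k" "vge y l" shows "vge (x*y) (k+l)"
proof (cases "x = 0 \<or> y = 0")
  case True then show ?thesis by auto
next
  case False then show ?thesis using assms v2_mult by (auto simp: vge_def)
qed

lemma vge_int: "vge (of_int z) 0" by (simp add: vge_def v2_int_nonneg)

lemma vge_one_plus: assumes "vge z 1" shows "v2 (1 + z) = 0" "1 + z \<noteq> 0"
proof -
  have "v2 (1 + z) = 0 \<and> 1 + z \<noteq> 0"
  proof (cases "z = 0")
    case True then show ?thesis by (simp add: v2_1)
  next
    case False
    then have "v2 1 < v2 z" using assms by (simp add: vge_def v2_1)
    then show ?thesis using v2_add_less[of 1 z] False v2_1 by simp
  qed
  then show "v2 (1 + z) = 0" "1 + z \<noteq> 0" by auto
qed

lemma vge_div_unit: assumes "vge x k" "u \<noteq> 0" "v2 u = 0" shows "vge (x/u) k"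
proof (cases "x = 0")
  case True then show ?thesis by simp
next
  case False then show ?thesis using assms v2_divide by (simp add: vge_def)
qed

lemma v2_dom: assumes "x \<noteq> 0" "vge y (v2 x + 1)" shows "v2 (x + y) = v2 x" "x + y \<noteq> 0"
proof -
  have "v2 (x + y) = v2 x \<and> x + y \<noteq> 0"
  proof (cases "y = 0")
    case True then show ?thesis using assms by simp
  next
    case False
    then have "v2 x < v2 y" using assms by (simp add: vge_def)
    then show ?thesis using v2_add_less[of x y] False assms by simp
  qed
  then show "v2 (x + y) = v2 x" "x + y \<noteq> 0" by auto
qed

lemma v2_4: "v2 4 = 2"
proof -
  have "(4::rat) = 2 * 2" by simp
  then show ?thesis using v2_mult[of 2 2] v2_2 by simp
qed

lemma v2_sq: "x \<noteq> 0 \<Longrightarrow> v2 (x^2) = 2 * v2 x" using v2_power[of x 2] by simp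

lemma not_sq2: "(x::rat)^2 \<noteq> 2"
proof
  assume h: "x^2 = 2"
  then have "x \<noteq> 0" by auto
  then have "v2 (x^2) = 2 * v2 x" by (rule v2_sq)
  then have "2 * v2 x = 1" using h v2_2 by simp
  then show False by presburger
qed

lemma unit_odd_repr:
  assumes "u \<noteq> 0" "v2 u = 0"
  obtains p r where "u = of_int p / of_int r" "odd p" "odd r"
proof -
  obtain p r where qr: "quotient_of u = (p, r)" by (cases "quotient_of u") auto
  have r0: "r > 0" using quotient_of_denom_pos[OF qr] .
  have eq: "u = of_int p / of_int r" using quotient_of_div[OF qr] .
  have cp: "coprime p r" using quotient_of_coprime[OF qr] .
  have p0: "p \<noteq> 0" using eq assms by auto
  have m: "multiplicity 2 p = multiplicity 2 r" using assms(2) unfolding v2_def qr by simp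
  have "odd p \<and> odd r"
  proof (rule ccontr)
    assume "\<not> (odd p \<and> odd r)"
    then have "even p \<or> even r" by blast
    then have "multiplicity 2 p \<ge> 1 \<or> multiplicity 2 r \<ge> 1"
      using p0 r0 by (auto intro: multiplicity_geI)
    then have "multiplicity 2 p \<ge> 1 \<and> multiplicity 2 r \<ge> 1" using m by simp
    then have "2 dvd p" "2 dvd r" using multiplicity_dvd'[of 1 2 p] multiplicity_dvd'[of 1 2 r] by auto
    then show False using cp
      by (metis coprime_common_divisor not_is_unit_0 odd_one prime_elem_def prime2 prime_elem_not_unit)
  qed
  then show ?thesis using that eq by blast
qed

lemma odd_sq_mod8: "odd (z::int) \<Longrightarrow> 8 dvd (z^2 - 1)"
proof -
  assume "odd z"
  then obtain k where k: "z = 2*k+1" by (metis oddE)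
  have "z^2 - 1 = 4*(k*(k+1))" unfolding k by algebra
  moreover have "even (k*(k+1))" by simp
  ultimately show ?thesis by (metis dvd_mult2 mult_dvd_mono dvd_refl numeral_Bit0 evenE mult.assoc
       mult_2 numeral_Bit0_eq_double)
qed

lemma sq_unit: assumes "u \<noteq> 0" "v2 u = 0" shows "vge (u^2 - 1) 3"
proof -
  obtain p r where pr: "u = of_int p / of_int r" "odd p" "odd r" using unit_odd_repr assms by blast
  have r0: "r \<noteq> 0" using pr by auto
  have e: "u^2 - 1 = of_int (p^2 - r^2) / of_int (r^2)" using r0 unfolding pr(1)
    by (simp add: field_simps power2_eq_square)
  show ?thesis
  proof (cases "p^2 - r^2 = 0")
    case True then show ?thesis using e by simp
  next
    case False
    have "8 dvd (p^2 - 1)" "8 dvd (r^2 - 1)" using odd_sq_mod8 pr by auto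
    then have "8 dvd (p^2 - 1) - (r^2 - 1)" by (rule dvd_diff)
    then have d: "2^3 dvd p^2 - r^2" by simp
    have m3: "3 \<le> multiplicity 2 (p^2 - r^2)" using d False by (intro multiplicity_geI) auto
    have "odd (r^2)" using pr by simp
    then have "multiplicity 2 (r^2) = 0" by (intro not_dvd_imp_multiplicity_0) simp
    moreover have "v2 (u^2 - 1) = int (multiplicity 2 (p^2 - r^2)) - int (multiplicity 2 (r^2))"
      unfolding e using False r0 by (intro v2_frac) auto
    ultimately show ?thesis using m3 by (simp add: vge_def)
  qed
qed

lemma vge_2: "vge 2 1" using v2_2 by (simp add: vge_def)

lemma depth:
  fixes x y nr :: rat
  assumes n0: "nr \<noteq> 0" and x0: "x \<noteq> 0" and y0: "y \<noteq> 0"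
    and c: "y^2 = x^3 + (2*nr)*x^2 + (-(nr^2))*x"
  shows "v2 ((x^2+nr^2)^2/(4*y^2)) < min (v2 x) (v2 nr)"
proof -
  define i where "i = v2 x"
  define j where "j = v2 nr"
  define A where "A = x^2 + nr^2"
  define B where "B = x^2 + 2*nr*x - nr^2"
  have y2: "y^2 = x * B" unfolding B_def using c by algebra
  have B0: "B \<noteq> 0" using y2 y0 by auto
  have A0: "A \<noteq> 0" unfolding A_def using n0 by (simp add: add_nonneg_pos)
  have x20: "x^2 \<noteq> 0" and n20: "nr^2 \<noteq> 0" using x0 n0 by auto
  have vx2: "v2 (x^2) = 2*i" unfolding i_def using v2_sq x0 by simp
  have vn2: "v2 (nr^2) = 2*j" unfolding j_def using v2_sq n0 by simp
  have vxn: "vge (2*nr*x) (1+j+i)" unfolding i_def j_def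
    using vge_mult[OF vge_mult[OF vge_2 vge_v2[of nr]] vge_v2[of x]] by simp
  have vy: "v2 (y^2) = i + v2 B" unfolding y2 i_def using v2_mult x0 B0 by simp
  have vR: "v2 ((x^2+nr^2)^2/(4*y^2)) = 2 * v2 A - 2 - v2 (y^2)"
  proof -
    have "v2 ((x^2+nr^2)^2/(4*y^2)) = v2 (A^2) - v2 (4*y^2)"
      unfolding A_def[symmetric] using A0 y0 by (simp add: v2_divide)
    also have "\<dots> = 2 * v2 A - 2 - v2 (y^2)" using A0 y0 v2_sq v2_mult[of 4 "y^2"] v2_4 by simp
    finally show ?thesis .
  qed
  consider (lt) "i < j" | (gt) "i > j" | (eq) "i = j" by linarith
  then show ?thesis
  proof cases
    case lt
    have "v2 A = 2*i"
      unfolding A_def using v2_dom(1)[OF x20, of "nr^2"] vx2 vn2 vge_v2[of "nr^2"] lt vge_mono by auto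
    moreover have "v2 B = 2*i"
    proof -
      have "vge (2*nr*x - nr^2) (2*i+1)"
        using vge_diff[OF vge_mono[OF vxn] vge_mono[OF vge_v2[of "nr^2"]]] vn2 lt by simp
      then have "v2 (x^2 + (2*nr*x - nr^2)) = v2 (x^2)" using v2_dom(1)[OF x20] vx2 by simp
      then show ?thesis unfolding B_def using vx2 by (simp add: algebra_simps)
    qed
    ultimately show ?thesis using vR vy lt unfolding i_def j_def by simp
  next
    case gt
    have "v2 A = 2*j"
    proof -
      have "v2 (nr^2 + x^2) = v2 (nr^2)" using v2_dom(1)[OF n20] vn2 vx2 vge_v2[of "x^2"] gt vge_mono by auto
      then show ?thesis unfolding A_def using vn2 by (simp add: add.commute)
    qed
    moreover have "v2 B = 2*j"
    proof -
      have n20': "-(nr^2) \<noteq> 0" using n20 by simp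
      have "vge (x^2 + 2*nr*x) (2*j+1)"
        using vge_add[OF vge_mono[OF vge_v2[of "x^2"]] vge_mono[OF vxn]] vx2 gt by simp
      then have "v2 (-(nr^2) + (x^2 + 2*nr*x)) = v2 (-(nr^2))" using v2_dom(1)[OF n20'] vn2 v2_uminus by simp
      then show ?thesis unfolding B_def using vn2 v2_uminus by (simp add: algebra_simps)
    qed
    ultimately show ?thesis using vR vy gt unfolding i_def j_def by simp
  next
    case eq
    define u where "u = x / nr"
    have xu: "x = nr * u" unfolding u_def using n0 by simp
    have u0: "u \<noteq> 0" using x0 xu by auto
    have vu: "v2 u = 0" unfolding u_def using v2_divide x0 n0 eq unfolding i_def j_def by simp
    have sq: "vge (u^2 - 1) 3" using sq_unit[OF u0 vu] .
    have two0: "(2::rat) \<noteq> 0" by simp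
    have A': "A = nr^2 * (2 + (u^2 - 1))" unfolding A_def xu by algebra
    have B': "B = nr^2 * (2*u + (u^2 - 1))" unfolding B_def xu by algebra
    have "v2 (2 + (u^2 - 1)) = 1" using v2_dom(1)[OF two0, of "u^2-1"] sq vge_mono v2_2 by simp
    moreover have "2 + (u^2 - 1) \<noteq> 0" using v2_dom(2)[OF two0, of "u^2-1"] sq vge_mono v2_2 by simp
    ultimately have vA: "v2 A = 2*j + 1" unfolding A' using v2_mult n20 vn2 by simp
    have tu0: "2*u \<noteq> 0" using u0 by simp
    have v2u: "v2 (2*u) = 1" using v2_mult[of 2 u] u0 vu v2_2 by simp
    have "v2 (2*u + (u^2 - 1)) = 1" using v2_dom(1)[OF tu0, of "u^2-1"] sq vge_mono v2u by simp
    moreover have "2*u + (u^2 - 1) \<noteq> 0" using v2_dom(2)[OF tu0, of "u^2-1"] sq vge_mono v2u by simp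
    ultimately have vB: "v2 B = 2*j + 1" unfolding B' using v2_mult n20 vn2 by simp
    show ?thesis using vR vy vA vB eq unfolding i_def j_def by simp
  qed
qed

lemma entry:
  fixes a b x y :: rat
  assumes ha: "vge a 0" and hb: "vge b 0" and x0: "x \<noteq> 0" and neg: "v2 x < 0"
    and c: "y^2 = x^3 + a*x^2 + b*x"
  shows "v2 (y^2) = 3 * v2 x" "y \<noteq> 0"
proof -
  have x3: "x^3 \<noteq> 0" using x0 by simp
  have vx3: "v2 (x^3) = 3 * v2 x" using v2_power[OF x0, of 3] by simp
  have "vge (a*x^2) (0 + 2 * v2 x)"
    using vge_mult[OF ha vge_v2[of "x^2"]] v2_sq[OF x0] by simp
  moreover have "vge (b*x) (0 + v2 x)" using vge_mult[OF hb vge_v2[of x]] by simp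
  ultimately have "vge (a*x^2) (v2 (x^3) + 1)" "vge (b*x) (v2 (x^3) + 1)"
    using vge_mono vx3 neg by auto
  then have "vge (a*x^2 + b*x) (v2 (x^3) + 1)" by (rule vge_add)
  then have "v2 (x^3 + (a*x^2 + b*x)) = v2 (x^3)" "x^3 + (a*x^2 + b*x) \<noteq> 0"
    using v2_dom[OF x3] by auto
  then show "v2 (y^2) = 3 * v2 x" "y \<noteq> 0" using c vx3 by (auto simp: add.assoc)
qed

lemma vge_mult_eq: "vge x k \<Longrightarrow> vge y l \<Longrightarrow> m = k + l \<Longrightarrow> vge (x*y) m"
  using vge_mult by simp

definition deep :: "int \<Rightarrow> point \<Rightarrow> bool" where
  "deep N Q = (case Q of Inf \<Rightarrow> True | Pt x y \<Rightarrow> y \<noteq> 0 \<and> vge (x/y) N \<and> vge (1/y) (3*N))"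

definition tt :: "point \<Rightarrow> rat" where
  "tt Q = (case Q of Inf \<Rightarrow> 0 | Pt x y \<Rightarrow> x/y)"

lemma FG_pt:
  fixes a b x1 y1 x2 y2 :: rat and N :: int
  assumes ha: "vge a 0" and hb: "vge b 0" and ns: "nonsing a b" and N1: "N \<ge> 1"
    and c1: "y1^2 = x1^3 + a*x1^2 + b*x1" and c2: "y2^2 = x2^3 + a*x2^2 + b*x2"
    and y10: "y1 \<noteq> 0" and y20: "y2 \<noteq> 0"
    and t1v: "vge (x1/y1) N" and s1v: "vge (1/y1) (3*N)"
    and t2v: "vge (x2/y2) N" and s2v: "vge (1/y2) (3*N)"
  shows "deep N (pt_add a b (Pt x1 y1) (Pt x2 y2)) \<and>
         vge (tt (pt_add a b (Pt x1 y1) (Pt x2 y2)) - x1/y1 - x2/y2) (3*N)"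
proof (cases "x1 = x2 \<and> y1 = -y2")
  case True
  then have "pt_add a b (Pt x1 y1) (Pt x2 y2) = Inf" by (simp add: pt_add_def)
  moreover have "x1/y1 + x2/y2 = 0" using True y10 by (simp add: field_simps)
  then have "- (x1/y1) - x2/y2 = 0" by linarith
  ultimately show ?thesis by (simp add: deep_def tt_def)
next
  case False
  obtain l v x3 where h1: "y1 = l*x1+v" and h2: "y2 = l*x2+v" and e1: "x1+x2+x3 = l^2 - a"
    and e2: "x1*x2+x1*x3+x2*x3 = b - 2*l*v" and e3: "x1*x2*x3 = v^2"
    and s: "pt_add a b (Pt x1 y1) (Pt x2 y2) = Pt x3 (-(l*x3+v))"
    using add_line[OF c1 c2 False] by blast
  define t1 where "t1 = x1/y1"
  define t2 where "t2 = x2/y2"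
  define s1 where "s1 = 1/y1"
  define s2 where "s2 = 1/y2"
  have ht1: "t1*y1 = x1" and hs1: "s1*y1 = 1" unfolding t1_def s1_def using y10 by auto
  have ht2: "t2*y2 = x2" and hs2: "s2*y2 = 1" unfolding t2_def s2_def using y20 by auto
  have ts1: "s1 = t1^3 + a*t1^2*s1 + b*t1*s1^2"
  proof -
    have "(s1 - (t1^3 + a*t1^2*s1 + b*t1*s1^2)) * y1^3 = y1^2*(s1*y1) - (t1*y1)^3 - a*(t1*y1)^2*(s1*y1) - b*(t1*y1)*(s1*y1)^2"
      by algebra
    also have "\<dots> = y1^2 - x1^3 - a*x1^2 - b*x1" unfolding ht1 hs1 by simp
    also have "\<dots> = 0" using c1 by simp
    finally have "(s1 - (t1^3 + a*t1^2*s1 + b*t1*s1^2)) * y1^3 = 0" .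
    then show ?thesis using y10 by simp
  qed
  have ts2: "s2 = t2^3 + a*t2^2*s2 + b*t2*s2^2"
  proof -
    have "(s2 - (t2^3 + a*t2^2*s2 + b*t2*s2^2)) * y2^3 = y2^2*(s2*y2) - (t2*y2)^3 - a*(t2*y2)^2*(s2*y2) - b*(t2*y2)*(s2*y2)^2"
      by algebra
    also have "\<dots> = y2^2 - x2^3 - a*x2^2 - b*x2" unfolding ht2 hs2 by simp
    also have "\<dots> = 0" using c2 by simp
    finally have "(s2 - (t2^3 + a*t2^2*s2 + b*t2*s2^2)) * y2^3 = 0" .
    then show ?thesis using y20 by simp
  qed
  have lt1: "l*t1 + v*s1 = 1"
  proof -
    have "(l*t1 + v*s1 - 1) * y1 = l*(t1*y1) + v*(s1*y1) - y1" by algebra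
    also have "\<dots> = 0" unfolding ht1 hs1 using h1 by simp
    finally have "(l*t1 + v*s1 - 1) * y1 = 0" .
    then show ?thesis using y10 by simp
  qed
  have lt2: "l*t2 + v*s2 = 1"
  proof -
    have "(l*t2 + v*s2 - 1) * y2 = l*(t2*y2) + v*(s2*y2) - y2" by algebra
    also have "\<dots> = 0" unfolding ht2 hs2 using h2 by simp
    finally have "(l*t2 + v*s2 - 1) * y2 = 0" .
    then show ?thesis using y20 by simp
  qed
  have vt1: "vge t1 N" and vt2: "vge t2 N" and vs1: "vge s1 (3*N)" and vs2: "vge s2 (3*N)"
    using t1v t2v s1v s2v unfolding t1_def t2_def s1_def s2_def by auto
  define z where "z = -(a*t1^2 + b*t1*(s1+s2))"
  define D where "D = 1 + z"
  have vz: "vge z 1"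
  proof -
    have "vge (a*t1^2) (0 + (N+N))" using vge_mult[OF ha vge_mult[OF vt1 vt1]] by (simp add: power2_eq_square)
    moreover have "vge (b*t1*(s1+s2)) (0 + N + 3*N)"
      using vge_mult[OF vge_mult[OF hb vt1] vge_add[OF vs1 vs2]] by simp
    ultimately have "vge (a*t1^2) 1" "vge (b*t1*(s1+s2)) 1" using N1 vge_mono by auto
    then show ?thesis unfolding z_def by (intro vge_uminus vge_add)
  qed
  have D0: "D \<noteq> 0" and vD: "v2 D = 0" unfolding D_def using vge_one_plus[OF vz] by auto
  define num where "num = t1^2 + t1*t2 + t2^2 + a*(t1+t2)*s2 + b*s2^2"
  have vnum: "vge num (2*N)"
  proof -
    have a1: "vge (t1^2) (2*N)" using vge_mult_eq[OF vt1 vt1, of "2*N"] by (simp add: power2_eq_square)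
    have a2: "vge (t1*t2) (2*N)" using vge_mult_eq[OF vt1 vt2, of "2*N"] by simp
    have a3: "vge (t2^2) (2*N)" using vge_mult_eq[OF vt2 vt2, of "2*N"] by (simp add: power2_eq_square)
    have "vge (a*(t1+t2)*s2) (0 + N + 3*N)" using vge_mult[OF vge_mult[OF ha vge_add[OF vt1 vt2]] vs2] by simp
    then have a4: "vge (a*(t1+t2)*s2) (2*N)" by (rule vge_mono) (use N1 in simp)
    have "vge (b*s2^2) (0 + (3*N + 3*N))" using vge_mult[OF hb vge_mult[OF vs2 vs2]] by (simp add: power2_eq_square)
    then have a5: "vge (b*s2^2) (2*N)" by (rule vge_mono) (use N1 in simp)
    show ?thesis unfolding num_def by (rule vge_add[OF vge_add[OF vge_add[OF vge_add[OF a1 a2] a3] a4] a5])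
  qed
  have KI: "(s2 - s1) * D = (t2 - t1) * num"
  proof -
    have "(s2 - s1) * D - (t2 - t1) * num = (s2 - (t2^3 + a*t2^2*s2 + b*t2*s2^2)) - (s1 - (t1^3 + a*t1^2*s1 + b*t1*s1^2))"
      unfolding D_def z_def num_def by algebra
    also have "\<dots> = 0" by (subst ts1[symmetric], subst ts2[symmetric]) simp
    finally show ?thesis by simp
  qed
  have CL: "v*num = -l*D"
  proof (cases "x1 = x2")
    case False
    have "t1 \<noteq> t2"
    proof
      assume tt: "t1 = t2"
      then have "s1 = s2" using KI D0 by simp
      then have yy: "y1 = y2" unfolding s1_def s2_def by simp
      have "x1 = x2" using ht1 ht2 tt yy by metis
      then show False using False by simp
    qed
    moreover have "(t2 - t1) * (v*num + l*D) = 0" using KI lt1 lt2 by algebra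
    ultimately have "v*num + l*D = 0" by simp
    then have "v*num = -(l*D)" by (simp add: eq_neg_iff_add_eq_0)
    then show ?thesis by simp
  next
    case True
    then have yy: "y1 = y2" using h1 h2 by simp
    then have tt: "t2 = t1" "s2 = s1" unfolding t1_def t2_def s1_def s2_def using True by auto
    have der: "3*x1^2 + 2*a*x1 + b = 2*l*y1" using e1 e2 True h1 by algebra
    have "(v*num + l*D) * y1^2 = v*(3*(t1*y1)^2 + 2*a*(t1*y1)*(s1*y1) + b*(s1*y1)^2) + l*(y1^2 - a*(t1*y1)^2 - 2*b*(t1*y1)*(s1*y1))"
      unfolding num_def D_def z_def tt by algebra
    also have "\<dots> = v*(3*x1^2 + 2*a*x1 + b) + l*(y1^2 - a*x1^2 - 2*b*x1)" unfolding ht1 hs1 by simp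
    also have "\<dots> = v*(2*l*y1) + l*(y1^2 - a*x1^2 - 2*b*x1)" by (simp only: der)
    also have "\<dots> = 3*l*y1^2 - 2*l^2*x1*y1 - l*a*x1^2 - 2*l*b*x1"
    proof -
      have vv: "v = y1 - l*x1" using h1 by simp
      show ?thesis unfolding vv by algebra
    qed
    also have "\<dots> = 3*l*(x1^3 + a*x1^2 + b*x1) - 2*l^2*x1*y1 - l*a*x1^2 - 2*l*b*x1" by (simp only: c1)
    also have "\<dots> = l*x1*(3*x1^2 + 2*a*x1 + b - 2*l*y1)" by algebra
    also have "\<dots> = 0" using der by simp
    finally have "(v*num + l*D) * y1^2 = 0" .
    then have "v*num + l*D = 0" using y10 by simp
    then have "v*num = -(l*D)" by (simp add: eq_neg_iff_add_eq_0)
    then show ?thesis by simp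
  qed
  have v0: "v \<noteq> 0"
  proof
    assume "v = 0"
    then have "l = 0" using CL D0 by simp
    then show False using lt1 \<open>v = 0\<close> by simp
  qed
  define al where "al = num / D"
  define be where "be = s1 - al*t1"
  have val: "vge al (2*N)" unfolding al_def using vge_div_unit[OF vnum D0 vD] .
  have vbe: "vge be (3*N)"
  proof -
    have "vge (al*t1) (2*N + N)" using vge_mult[OF val vt1] .
    then show ?thesis unfolding be_def using vge_diff[OF vs1] by simp
  qed
  have alv: "al*v = -l" unfolding al_def using CL D0 by (simp add: field_simps)
  have bev: "be*v = 1" unfolding be_def using alv lt1 by algebra
  define y3 where "y3 = l*x3+v"
  have c3: "y3^2 = x3^3 + a*x3^2 + b*x3" unfolding y3_def using cubic_root[OF e1 e2 e3] .
  have y30: "y3 \<noteq> 0"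
  proof
    assume "y3 = 0"
    then have "x3 * (x3^2 + a*x3 + b) = 0" using c3 by algebra
    then have "x3 = 0" using ns unfolding nonsing_def by auto
    then show False using e3 v0 by simp
  qed
  define E where "E = 1 + (a*al + b*al^2)"
  have vE1: "vge (a*al + b*al^2) 1"
  proof -
    have "vge (a*al) (0 + 2*N)" using vge_mult[OF ha val] .
    moreover have "vge (b*al^2) (0 + (2*N + 2*N))" using vge_mult[OF hb vge_mult[OF val val]] by (simp add: power2_eq_square)
    ultimately have "vge (a*al) 1" "vge (b*al^2) 1" by (auto elim!: vge_mono simp: N1) (use N1 in linarith)+
    then show ?thesis by (rule vge_add)
  qed
  have E0: "E \<noteq> 0" and vE: "v2 E = 0" unfolding E_def using vge_one_plus[OF vE1] by auto
  define ga where "ga = be*(a + 2*b*al)/E"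
  have vga: "vge ga (3*N)"
  proof -
    have "vge (a + 2*b*al) 0"
    proof -
      have "vge (2*b*al) (0 + 0 + 2*N)" using vge_mult[OF vge_mult[OF vge_int[of 2] hb] val] by simp
      then have "vge (2*b*al) 0" by (rule vge_mono) (use N1 in simp)
      then show ?thesis using vge_add[OF ha] by simp
    qed
    then have "vge (be*(a + 2*b*al)) (3*N + 0)" using vge_mult[OF vbe] by blast
    then show ?thesis unfolding ga_def using vge_div_unit[OF _ E0 vE] by simp
  qed
  have D0def: "E * v^2 = v^2 - a*l*v + b*l^2" unfolding E_def using alv by algebra
  have gaD: "ga * (v^2 - a*l*v + b*l^2) = a*v - 2*b*l"
  proof -
    have "ga * (E*v^2) = be*(a + 2*b*al)*v^2" unfolding ga_def using E0 by simp
    also have "\<dots> = a*v - 2*b*l" using alv bev by algebra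
    finally show ?thesis using D0def by simp
  qed
  have D00: "v^2 - a*l*v + b*l^2 \<noteq> 0" using D0def E0 v0 by auto
  have prody: "y1*y2*y3 = v*(v^2 - a*l*v + b*l^2)" unfolding y3_def h1 h2 using e1 e2 e3 by algebra
  have sumnum: "x1*y2*y3 + x2*y1*y3 + x3*y1*y2 = -v*(a*v - 2*b*l)" unfolding y3_def h1 h2 using e1 e2 e3 by algebra
  have vieta: "t1 + t2 + x3/y3 = - ga"
  proof -
    have "(t1 + t2 + x3/y3) * (y1*y2*y3) = x1*y2*y3 + x2*y1*y3 + x3*y1*y2"
      unfolding t1_def t2_def using y10 y20 y30 by (simp add: field_simps)
    also have "\<dots> = -v*(a*v - 2*b*l)" by (rule sumnum)
    also have "\<dots> = -ga * (y1*y2*y3)" unfolding prody using gaD by algebra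
    finally have "(t1 + t2 + x3/y3 + ga) * (y1*y2*y3) = 0" by (simp add: algebra_simps)
    then have "t1 + t2 + x3/y3 + ga = 0" using y10 y20 y30 by simp
    then show ?thesis by (simp add: eq_neg_iff_add_eq_0)
  qed
  have tQ3: "x3/(-y3) = t1 + t2 + ga" using vieta by (simp add: field_simps)
  have sQ3: "1/(-y3) = al*(x3/(-y3)) - be"
  proof -
    have "al*x3 + be*y3 = 1" unfolding y3_def using alv bev by algebra
    then show ?thesis using y30 by (simp add: field_simps)
  qed
  have vt3: "vge (x3/(-y3)) N"
  proof -
    have "vge ga N" using vga by (rule vge_mono) (use N1 in simp)
    then show ?thesis unfolding tQ3 using vt1 vt2 by (intro vge_add)
  qed
  have vs3: "vge (1/(-y3)) (3*N)"
  proof -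
    have "vge (al*(x3/(-y3))) (2*N + N)" using vge_mult[OF val vt3] .
    then show ?thesis unfolding sQ3 using vge_diff[OF _ vbe] by simp
  qed
  have "pt_add a b (Pt x1 y1) (Pt x2 y2) = Pt x3 (-y3)" using s unfolding y3_def .
  moreover have "tt (Pt x3 (-y3)) - x1/y1 - x2/y2 = ga"
    using tQ3 unfolding tt_def t1_def t2_def by simp
  ultimately show ?thesis using vt3 vs3 vga y30 by (simp add: deep_def)
qed

lemma FG:
  assumes ha: "vge a 0" and hb: "vge b 0" and ns: "nonsing a b" and N1: "N \<ge> 1"
    and c1: "on_curve a b P1" and c2: "on_curve a b P2" and d1: "deep N P1" and d2: "deep N P2"
  shows "deep N (pt_add a b P1 P2) \<and> vge (tt (pt_add a b P1 P2) - tt P1 - tt P2) (3*N)"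
proof (cases P1)
  case Inf then show ?thesis using d2 by (simp add: tt_def)
next
  case (Pt x1 y1)
  show ?thesis
  proof (cases P2)
    case Inf then show ?thesis using d1 by (simp add: tt_def)
  next
    case (Pt x2 y2)
    show ?thesis using FG_pt[OF ha hb ns N1, of y1 x1 y2 x2] c1 c2 d1 d2 \<open>P1 = Pt x1 y1\<close> Pt
      by (simp add: on_curve_Pt deep_def tt_def)
  qed
qed

lemma mw_one[simp]: "one (mw_group a b) = Inf" by (simp add: mw_group_def)
lemma mw_times[simp]: "monoid.mult (mw_group a b) x y = pt_add a b x y" by (simp add: mw_group_def)
lemma mw_carrier[simp]: "carrier (mw_group a b) = {P. on_curve a b P}" by (simp add: mw_group_def)

lemma mw_mult: "pow (mw_group a b) P (Suc k) = pt_add a b (pow (mw_group a b) P k) P"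
  by (simp add: mw_group_def)

lemma mw_pow0: "pow (mw_group a b) P (0::nat) = Inf"
  by (simp add: mw_group_def)

lemma on_curve_Inf[simp]: "on_curve a b Inf" by (simp add: on_curve_def)

lemma pow_closed: "on_curve a b P \<Longrightarrow> on_curve a b (pow (mw_group a b) P (k::nat))"
  by (induction k) (simp_all add: add_closed)

lemma FG_pow:
  assumes ha: "vge a 0" and hb: "vge b 0" and ns: "nonsing a b" and N1: "N \<ge> 1"
    and c: "on_curve a b Q" and d: "deep N Q"
  shows "deep N (pow (mw_group a b) Q (k::nat)) \<and> vge (tt (pow (mw_group a b) Q k) - of_nat k * tt Q) (3*N)"
proof (induction k)
  case 0 then show ?case by (simp add: mw_pow0 deep_def tt_def)
next
  case (Suc k)
  let ?Q = "pow (mw_group a b) Q k"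
  have "deep N (pt_add a b ?Q Q) \<and> vge (tt (pt_add a b ?Q Q) - tt ?Q - tt Q) (3*N)"
    using FG[OF ha hb ns N1 pow_closed[OF c] c _ d] Suc by blast
  then have "deep N (pt_add a b ?Q Q)" "vge (tt (pt_add a b ?Q Q) - tt ?Q - tt Q + (tt ?Q - of_nat k * tt Q)) (3*N)"
    using Suc vge_add by blast+
  then show ?case by (simp add: mw_mult algebra_simps)
qed

definition sc :: "rat \<Rightarrow> point \<Rightarrow> point" where
  "sc u P = (case P of Inf \<Rightarrow> Inf | Pt x y \<Rightarrow> Pt (u^2*x) (u^3*y))"

lemma sc_curve: "on_curve a b P \<Longrightarrow> on_curve (u^2*a) (u^4*b) (sc u P)"
proof (cases P)
  case Inf then show ?thesis by (simp add: sc_def on_curve_def)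
next
  case (Pt x y)
  assume "on_curve a b P"
  then have c: "y^2 = x^3 + a*x^2 + b*x" using Pt by (simp add: on_curve_Pt)
  have "(u^3*y)^2 = (u^2*x)^3 + (u^2*a)*(u^2*x)^2 + (u^4*b)*(u^2*x)" using c by algebra
  then show ?thesis using Pt by (simp add: sc_def on_curve_Pt)
qed

lemma sc_hom:
  assumes u0: "u \<noteq> 0" and ns: "nonsing (u^2*a) (u^4*b)"
    and cP: "on_curve a b P" and cQ: "on_curve a b Q"
  shows "sc u (pt_add a b P Q) = pt_add (u^2*a) (u^4*b) (sc u P) (sc u Q)"
proof (cases P)
  case Inf then show ?thesis by (simp add: sc_def)
next
  case (Pt x1 y1)
  note P = this
  show ?thesis
  proof (cases Q)
    case Inf then show ?thesis by (simp add: sc_def)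
  next
    case (Pt x2 y2)
    note Q = this
    have c1: "y1^2 = x1^3 + a*x1^2 + b*x1" using cP P by (simp add: on_curve_Pt)
    have c2: "y2^2 = x2^3 + a*x2^2 + b*x2" using cQ Q by (simp add: on_curve_Pt)
    show ?thesis
    proof (cases "x1 = x2 \<and> y1 = -y2")
      case True then show ?thesis using P Q by (simp add: pt_add_def sc_def)
    next
      case False
      obtain l v x3 where h1: "y1 = l*x1+v" and h2: "y2 = l*x2+v" and e1: "x1+x2+x3 = l^2 - a"
        and e2: "x1*x2+x1*x3+x2*x3 = b - 2*l*v" and e3: "x1*x2*x3 = v^2"
        and s: "pt_add a b (Pt x1 y1) (Pt x2 y2) = Pt x3 (-(l*x3+v))"
        using add_line[OF c1 c2 False] by blast
      have c1': "(u^3*y1)^2 = (u^2*x1)^3 + (u^2*a)*(u^2*x1)^2 + (u^4*b)*(u^2*x1)" using c1 by algebra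
      have l1: "u^3*y1 = (u*l)*(u^2*x1) + u^3*v" unfolding h1 by algebra
      have l2: "u^3*y2 = (u*l)*(u^2*x2) + u^3*v" unfolding h2 by algebra
      have e1': "u^2*x1 + u^2*x2 + u^2*x3 = (u*l)^2 - u^2*a" using e1 by algebra
      have e2': "(u^2*x1)*(u^2*x2) + (u^2*x1)*(u^2*x3) + (u^2*x2)*(u^2*x3) = u^4*b - 2*(u*l)*(u^3*v)"
        using e2 by algebra
      have e3': "(u^2*x1)*(u^2*x2)*(u^2*x3) = (u^3*v)^2" using e3 by algebra
      have "pt_add (u^2*a) (u^4*b) (Pt (u^2*x1) (u^3*y1)) (Pt (u^2*x2) (u^3*y2)) =
            Pt (u^2*x3) (-((u*l)*(u^2*x3) + u^3*v))"
        by (rule line_add[OF ns c1' l1 l2 e1' e2' e3'])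
      moreover have "-((u*l)*(u^2*x3) + u^3*v) = u^3*(-(l*x3+v))" by algebra
      ultimately show ?thesis using s P Q by (simp add: sc_def)
    qed
  qed
qed

lemma ns1: assumes "nr \<noteq> 0" shows "nonsing (2*nr) (-(nr^2))"
proof -
  have "\<forall>x. x^2 + (2*nr)*x + (-(nr^2)) \<noteq> 0"
  proof (intro allI notI)
    fix x assume h: "x^2 + (2*nr)*x + (-(nr^2)) = 0"
    have "(x+nr)^2 = 2*nr^2" using h by algebra
    then have "((x+nr)/nr)^2 = 2" using assms by (simp add: power_divide)
    then show False using not_sq2 by blast
  qed
  then show ?thesis using assms unfolding nonsing_def by simp
qed

lemma nsq1: assumes "nr \<noteq> 0" shows "\<forall>x. x^2 \<noteq> -((nr::rat)^2)"
proof
  fix x :: rat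
  have "x^2 \<ge> 0" by simp
  moreover have "-(nr^2) < 0" using assms by simp
  ultimately show "x^2 \<noteq> -(nr^2)" by linarith
qed

lemma ns2: assumes "nr \<noteq> 0" shows "nonsing (-4*nr) (8*nr^2)"
proof -
  have "\<forall>x. x^2 + (-4*nr)*x + 8*nr^2 \<noteq> 0"
  proof (intro allI notI)
    fix x assume h: "x^2 + (-4*nr)*x + 8*nr^2 = 0"
    have "(x - 2*nr)^2 + 4*nr^2 = 0" using h by algebra
    moreover have "(x - 2*nr)^2 \<ge> 0" by simp
    moreover have "4*nr^2 > 0" using assms by simp
    ultimately show False by linarith
  qed
  then show ?thesis using assms unfolding nonsing_def by simp
qed

lemma nsq2: assumes "nr \<noteq> 0" shows "\<forall>x. x^2 \<noteq> 8*(nr::rat)^2"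
proof (intro allI notI)
  fix x :: rat assume h: "x^2 = 8*nr^2"
  have "(x/(2*nr))^2 = x^2/(4*nr^2)" by (simp add: power_divide power_mult_distrib)
  also have "\<dots> = 2" using h assms by simp
  finally show False using not_sq2 by blast
qed

definition H :: "rat \<Rightarrow> point \<Rightarrow> point" where
  "H nr P = sc (1/2) (phi (8*nr^2) (phi (-(nr^2)) P))"

lemma eqs: "-2*(2*nr) = -4*(nr::rat)" "(2*nr)^2 - 4*(-(nr^2)) = 8*(nr::rat)^2"
  "-2*(-4*nr) = 8*(nr::rat)" "(-4*nr)^2 - 4*(8*nr^2) = -16*(nr::rat)^2"
  "(1/2)^2*(8*nr) = 2*(nr::rat)" "(1/2)^4*(-16*nr^2) = -((nr::rat)^2)"
  by algebra+

lemma phi1_curve: "on_curve (2*nr) (-(nr^2)) P \<Longrightarrow> on_curve (-4*nr) (8*nr^2) (phi (-(nr^2)) P)"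
  using phi_curve[of "2*nr" "-(nr^2)" P] unfolding eqs .

lemma phi2_curve: "on_curve (-4*nr) (8*nr^2) P \<Longrightarrow> on_curve (8*nr) (-16*nr^2) (phi (8*nr^2) P)"
  using phi_curve[of "-4*nr" "8*nr^2" P] unfolding eqs .

lemma H_curve: "on_curve (2*nr) (-(nr^2)) P \<Longrightarrow> on_curve (2*nr) (-(nr^2)) (H nr P)"
  unfolding H_def using sc_curve[OF phi2_curve[OF phi1_curve], of nr P "1/2"] unfolding eqs .

lemma H_Inf[simp]: "H nr Inf = Inf" by (simp add: H_def sc_def)

lemma H_hom:
  assumes n0: "nr \<noteq> 0" and cP: "on_curve (2*nr) (-(nr^2)) P" and cQ: "on_curve (2*nr) (-(nr^2)) Q"
  shows "H nr (pt_add (2*nr) (-(nr^2)) P Q) = pt_add (2*nr) (-(nr^2)) (H nr P) (H nr Q)"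
proof -
  have 1: "phi (-(nr^2)) (pt_add (2*nr) (-(nr^2)) P Q) = pt_add (-4*nr) (8*nr^2) (phi (-(nr^2)) P) (phi (-(nr^2)) Q)"
    using phi_hom[OF ns1[OF n0] nsq1[OF n0] cP cQ] unfolding eqs .
  have ns2': "nonsing (-4*nr) (8*nr^2)" using ns2[OF n0] .
  have 2: "phi (8*nr^2) (pt_add (-4*nr) (8*nr^2) (phi (-(nr^2)) P) (phi (-(nr^2)) Q)) =
     pt_add (8*nr) (-16*nr^2) (phi (8*nr^2) (phi (-(nr^2)) P)) (phi (8*nr^2) (phi (-(nr^2)) Q))"
    using phi_hom[OF ns2' nsq2[OF n0] phi1_curve[OF cP] phi1_curve[OF cQ]] unfolding eqs .
  have ns3: "nonsing ((1/2)^2*(8*nr)) ((1/2)^4*(-16*nr^2))" unfolding eqs using ns1[OF n0] .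
  have 3: "sc (1/2) (pt_add (8*nr) (-16*nr^2) (phi (8*nr^2) (phi (-(nr^2)) P)) (phi (8*nr^2) (phi (-(nr^2)) Q)))
     = pt_add (2*nr) (-(nr^2)) (H nr P) (H nr Q)"
    using sc_hom[OF _ ns3 phi2_curve[OF phi1_curve[OF cP]] phi2_curve[OF phi1_curve[OF cQ]]]
    unfolding eqs H_def by simp
  show ?thesis unfolding H_def 1 2 3 [unfolded H_def] ..
qed

lemma H_Pt:
  assumes n0: "nr \<noteq> 0" and c: "on_curve (2*nr) (-(nr^2)) (Pt x y)" and x0: "x \<noteq> 0"
  shows "y \<noteq> 0" "\<exists>y'. H nr (Pt x y) = Pt ((x^2+nr^2)^2/(4*y^2)) y'"
proof -
  have c0: "y^2 = x^3 + (2*nr)*x^2 + (-(nr^2))*x" using c by (simp add: on_curve_Pt)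
  have "x^3 + (2*nr)*x^2 + (-(nr^2))*x = x * (x^2 + (2*nr)*x + (-(nr^2)))" by algebra
  then have cy: "y^2 = x * (x^2 + (2*nr)*x + (-(nr^2)))" using c0 by simp
  moreover have "x^2 + (2*nr)*x + (-(nr^2)) \<noteq> 0" using ns1[OF n0] unfolding nonsing_def by blast
  ultimately show y0: "y \<noteq> 0" using x0 by auto
  define X where "X = y^2/x^2"
  define Y where "Y = y*(x^2 - -(nr^2))/x^2"
  have X0: "X \<noteq> 0" unfolding X_def using x0 y0 by simp
  have p1: "phi (-(nr^2)) (Pt x y) = Pt X Y" unfolding X_def Y_def phi_def using x0 by simp
  have p2: "phi (8*nr^2) (Pt X Y) = Pt (Y^2/X^2) (Y*(X^2 - 8*nr^2)/X^2)" unfolding phi_def using X0 by simp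
  have e: "(1/2)^2 * (Y^2/X^2) = (x^2+nr^2)^2/(4*y^2)"
    unfolding X_def Y_def using x0 y0 by (simp add: field_simps power2_eq_square)
  show "\<exists>y'. H nr (Pt x y) = Pt ((x^2+nr^2)^2/(4*y^2)) y'"
    unfolding H_def p1 p2 sc_def using e by simp
qed

lemma H_pow:
  assumes n0: "nr \<noteq> 0" and c: "on_curve (2*nr) (-(nr^2)) P"
  shows "H nr (pow (mw_group (2*nr) (-(nr^2))) P (k::nat)) = pow (mw_group (2*nr) (-(nr^2))) (H nr P) k"
proof (induction k)
  case 0 then show ?case by simp
next
  case (Suc k)
  then show ?case using H_hom[OF n0 pow_closed[OF c] c] by simp
qed

lemma v2_nat_less: assumes "k > 0" shows "v2 (of_nat k) < int k"
proof -
  have k0: "int k \<noteq> 0" using assms by simp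
  have e: "(of_nat k :: rat) = of_int (int k)" by simp
  have "v2 (of_nat k) = int (multiplicity 2 (int k))" unfolding e using v2_int[OF k0] .
  moreover have "2 ^ multiplicity 2 (int k) dvd int k" by (rule multiplicity_dvd)
  then have "2 ^ multiplicity 2 (int k) \<le> int k" using assms by (intro zdvd_imp_le) auto
  moreover have "int (multiplicity 2 (int k)) < 2 ^ multiplicity 2 (int k)"
    using less_exp[of "multiplicity 2 (int k)"] by (metis of_nat_less_iff of_nat_numeral of_nat_power)
  ultimately show ?thesis by linarith
qed

lemma no_torsion:
  fixes n :: int and k :: nat
  assumes n0: "n \<noteq> 0" and c: "on_curve (2*of_int n) (-((of_int n)^2)) (Pt x y)" and x0: "x \<noteq> 0"
    and k0: "k > 0"
  shows "pow (mw_group (2*of_int n) (-((of_int n)^2))) (Pt x y) k \<noteq> Inf"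
proof
  define nr :: rat where "nr = of_int n"
  define G where "G = mw_group (2*nr) (-(nr^2))"
  assume tor: "pow (mw_group (2*of_int n) (-((of_int n)^2))) (Pt x y) k = Inf"
  then have tor': "pow G (Pt x y) k = Inf" unfolding G_def nr_def .
  have nr0: "nr \<noteq> 0" unfolding nr_def using n0 by simp
  have c': "on_curve (2*nr) (-(nr^2)) (Pt x y)" using c unfolding nr_def .
  have vn: "v2 nr \<ge> 0" unfolding nr_def by (rule v2_int_nonneg)
  define m0 where "m0 = min (v2 x) (v2 nr)"
  define Q where "Q j = (H nr ^^ j) (Pt x y)" for j
  have inv: "\<exists>xj yj. Q j = Pt xj yj \<and> xj \<noteq> 0 \<and> on_curve (2*nr) (-(nr^2)) (Pt xj yj)
      \<and> min (v2 xj) (v2 nr) \<le> m0 - int j" for j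
  proof (induction j)
    case 0 then show ?case using c' x0 unfolding Q_def m0_def by simp
  next
    case (Suc j)
    then obtain xj yj where h: "Q j = Pt xj yj" "xj \<noteq> 0" "on_curve (2*nr) (-(nr^2)) (Pt xj yj)"
      "min (v2 xj) (v2 nr) \<le> m0 - int j" by blast
    have y0: "yj \<noteq> 0" using H_Pt(1)[OF nr0 h(3) h(2)] .
    obtain y' where hp: "H nr (Pt xj yj) = Pt ((xj^2+nr^2)^2/(4*yj^2)) y'" using H_Pt(2)[OF nr0 h(3) h(2)] by blast
    define x' where "x' = (xj^2+nr^2)^2/(4*yj^2)"
    have x'0: "x' \<noteq> 0" unfolding x'_def using y0 nr0 by (simp add: add_nonneg_pos)
    have cj: "yj^2 = xj^3 + (2*nr)*xj^2 + (-(nr^2))*xj" using h(3) by (simp add: on_curve_Pt)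
    have dp: "v2 x' < min (v2 xj) (v2 nr)" unfolding x'_def using depth[OF nr0 h(2) y0 cj] .
    have QS: "Q (Suc j) = Pt x' y'" unfolding Q_def using hp h(1) unfolding Q_def x'_def by simp
    have "on_curve (2*nr) (-(nr^2)) (Pt x' y')" using H_curve[OF h(3)] hp unfolding x'_def by simp
    moreover have "min (v2 x') (v2 nr) \<le> m0 - int (Suc j)" using dp h(4) by linarith
    ultimately show ?case using QS x'0 by blast
  qed
  have torj: "pow G (Q j) k = Inf" for j
  proof (induction j)
    case 0 then show ?case using tor' unfolding Q_def by simp
  next
    case (Suc j)
    obtain xj yj where h: "Q j = Pt xj yj" "on_curve (2*nr) (-(nr^2)) (Pt xj yj)" using inv by blast
    have "Q (Suc j) = H nr (Q j)" unfolding Q_def by simp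
    then have "pow G (Q (Suc j)) k = H nr (pow G (Q j) k)" unfolding G_def using H_pow[OF nr0 h(2)] h(1) by simp
    then show ?case using Suc by simp
  qed
  define j where "j = nat (m0 + 2 * int k)"
  obtain xq yq where q: "Q j = Pt xq yq" "xq \<noteq> 0" "on_curve (2*nr) (-(nr^2)) (Pt xq yq)"
    "min (v2 xq) (v2 nr) \<le> m0 - int j" using inv by blast
  have "min (v2 xq) (v2 nr) \<le> - 2 * int k" using q(4) unfolding j_def by linarith
  then have iq: "v2 xq \<le> - 2 * int k" using vn k0 by linarith
  have ha: "vge (2*nr) 0" unfolding nr_def using vge_int[of "2*n"] by simp
  have hb: "vge (-(nr^2)) 0" unfolding nr_def using vge_int[of "-(n^2)"] by simp
  have cq: "yq^2 = xq^3 + (2*nr)*xq^2 + (-(nr^2))*xq" using q(3) by (simp add: on_curve_Pt)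
  have neg: "v2 xq < 0" using iq k0 by linarith
  have ent: "v2 (yq^2) = 3 * v2 xq" "yq \<noteq> 0" using entry[OF ha hb q(2) neg cq] by auto
  have wy: "2 * v2 yq = 3 * v2 xq" using ent v2_sq by simp
  define N where "N = v2 xq - v2 yq"
  have iN: "v2 xq = -2*N" unfolding N_def using wy by presburger
  have wN: "v2 yq = -3*N" unfolding N_def using wy by presburger
  have Nk: "N \<ge> int k" using iN iq by linarith
  have N1: "N \<ge> 1" using Nk k0 by linarith
  have vt: "v2 (xq/yq) = N" using v2_divide[OF q(2) ent(2)] iN wN by simp
  have vs: "v2 (1/yq) = 3*N" using v2_divide[of 1 yq] ent(2) wN v2_1 by simp
  have t0: "xq/yq \<noteq> 0" using q(2) ent(2) by simp
  have dq: "deep N (Pt xq yq)" unfolding deep_def using ent(2) vt vs by (simp add: vge_def)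
  have ns: "nonsing (2*nr) (-(nr^2))" using ns1[OF nr0] .
  have "vge (tt (pow G (Pt xq yq) k) - of_nat k * tt (Pt xq yq)) (3*N)"
    using FG_pow[OF ha hb ns N1 q(3) dq] unfolding G_def by blast
  moreover have "pow G (Pt xq yq) k = Inf" using torj[of j] q(1) by simp
  ultimately have "vge (-(of_nat k * (xq/yq))) (3*N)" by (simp add: tt_def)
  then have "vge (of_nat k * (xq/yq)) (3*N)" using vge_uminus by fastforce
  moreover have "of_nat k * (xq/yq) \<noteq> 0" using k0 t0 by simp
  moreover have "v2 (of_nat k * (xq/yq)) = v2 (of_nat k) + N" using v2_mult[of "of_nat k" "xq/yq"] k0 t0 vt by simp
  ultimately have "3*N \<le> v2 (of_nat k) + N" by (simp add: vge_def)
  moreover have "v2 (of_nat k) < int k" using v2_nat_less[OF k0] .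
  ultimately show False using Nk by linarith
qed

theorem lemma2p4:
  fixes n :: int
  assumes "n \<noteq> 0"
  shows "torsion_subgroup (E n) \<cong> integer_mod_group 2"
proof -
  define a :: rat where "a = 2 * of_int n"
  define b :: rat where "b = - ((of_int n :: rat) ^ 2)"
  have EG: "E n = mw_group a b" unfolding E_def a_def b_def ..
  define T where "T = torsion_subgroup (E n)"
  have carT: "carrier T = {Inf, Pt 0 0}"
  proof -
    have "carrier T = {P. on_curve a b P \<and> (\<exists>k::nat. k > 0 \<and> pow (mw_group a b) P k = Inf)}"
      unfolding T_def torsion_subgroup_def EG by simp
    also have "\<dots> = {Inf, Pt 0 0}"
    proof (intro equalityI subsetI)
      fix P assume "P \<in> {P. on_curve a b P \<and> (\<exists>k::nat. k > 0 \<and> pow (mw_group a b) P k = Inf)}"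
      then obtain k :: nat where c: "on_curve a b P" and k0: "k > 0" and t: "pow (mw_group a b) P k = Inf" by blast
      show "P \<in> {Inf, Pt 0 0}"
      proof (cases P)
        case Inf then show ?thesis by simp
      next
        case (Pt x y)
        show ?thesis
        proof (cases "x = 0")
          case True
          then have "y^2 = 0" using c Pt by (simp add: on_curve_Pt)
          then show ?thesis using True Pt by simp
        next
          case False
          have "pow (mw_group a b) P k \<noteq> Inf"
            using no_torsion[OF assms _ False k0, of y] c Pt unfolding a_def b_def by simp
          then show ?thesis using t by simp
        qed
      qed
    next
      fix P assume "P \<in> {Inf, Pt 0 0}"
      then show "P \<in> {P. on_curve a b P \<and> (\<exists>k::nat. k > 0 \<and> pow (mw_group a b) P k = Inf)}"
      proof
        assume "P = Inf"
        then show ?thesis by (intro CollectI conjI exI[of _ "1::nat"]) (simp_all add: mw_pow0 mw_mult)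
      next
        assume "P \<in> {Pt 0 0}"
        then have P: "P = Pt 0 0" by simp
        have "pow (mw_group a b) P (2::nat) = Inf" unfolding P numeral_2_eq_2 mw_mult mw_pow0
          by (simp add: pt_add_def)
        moreover have "on_curve a b P" unfolding P by (simp add: on_curve_Pt)
        ultimately show ?thesis by (auto intro!: exI[of _ "2::nat"])
      qed
    qed
    finally show ?thesis .
  qed
  have mulT: "monoid.mult T = pt_add a b" unfolding T_def torsion_subgroup_def EG by (simp add: mw_group_def)
  define h :: "point \<Rightarrow> int" where "h P = (if P = Inf then 0 else 1)" for P
  have TT: "pt_add a b (Pt 0 0) (Pt 0 0) = Inf" by (simp add: pt_add_def)
  have "h \<in> iso T (integer_mod_group 2)"
    unfolding iso_def hom_def
  proof (intro CollectI conjI)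
    show "h \<in> carrier T \<rightarrow> carrier (integer_mod_group 2)"
      unfolding carT by (auto simp: h_def carrier_integer_mod_group)
    show "\<forall>x\<in>carrier T. \<forall>y\<in>carrier T. h (x \<otimes>\<^bsub>T\<^esub> y) = h x \<otimes>\<^bsub>integer_mod_group 2\<^esub> h y"
      unfolding carT mulT by (auto simp: h_def TT)
    show "bij_betw h (carrier T) (carrier (integer_mod_group 2))"
      unfolding carT carrier_integer_mod_group bij_betw_def
      by (auto simp: h_def inj_on_def image_def)
  qed
  then show ?thesis unfolding T_def by (rule is_isoI)
qed

end
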